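(* Let $N=2$ with $Q=\{A,B\}$. For every $k>4L$, every window string $\vec n=(n_1,\dots,n_k)$ with $L\ge n_1\ge\cdots\ge n_k\ge1$, every $\vec q\in Q^k$ and every $\mu\in\{0,1\}^{k-1}$, the string $\vec n$ contains five equal consecutive entries $n_{i-2}=\cdots=n_{i+2}$, and consequently there exist $\vec n'$ (of length $k-2$, obtained from $\vec n$ by deleting two of these five entries), $\vec q'\in Q^{k-2}$, $\mu'\in\{0,1\}^{k-3}$ and a scalar $c$ independent of $U_1,\dots,U_L$ and $\tilde O$ with $\mathbf{T}^{(k)}_{\vec q;\mu}(\vec n)=c\,\mathbf{T}^{(k-2)}_{\vec q';\mu'}(\vec n')$. In particular all two-qubit control tensors reduce to those of order at most $4L$.
   Context: Fix integers $L\ge 1$ and $N\ge 1$, and a set $Q$ of $N$ qubit labels. For $q\in Q$ let $\sigma_z^{[q]}$ denote the Pauli-$Z$ operator acting on qubit $q$ tensored with the identity on all other qubits of $(\mathbb{C}^2)^{\otimes N}$. (Digital control) Let $U_1,\dots,U_L$ be arbitrary unitaries on $(\mathbb{C}^2)^{\otimes N}$ ($U_n$ is the control propagator, constant on the $n$-th time window), and let $\tilde O$ be an arbitrary Hermitian unitary operator on $(\mathbb{C}^2)^{\otimes N}$ (the toggling-frame observable). For $q\in Q$ and $n\in\{1,\dots,L\}$ define $\tilde h_q(n)=U_n^\dagger\sigma_z^{[q]}U_n$ and $\bar h_q(n)=-\tilde O^{-1}\tilde h_q(n)\tilde O$. For $k\ge1$, a window string $\vec n=(n_1,\dots,n_k)$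 with $L\ge n_1\ge\cdots\ge n_k\ge1$, a qubit string $\vec q=(q_1,\dots,q_k)\in Q^k$ and a sign string $\mu\in\{0,1\}^{k-1}$, the (window-framed) control tensor is $$\mathbf{T}^{(k)}_{\vec q;\mu}(\vec n)=\sum_{b\in\{0,1\}^k}(-1)^{\sum_{j=1}^{k-1}\mu_j b_{j+1}}\Big(\prod^{\downarrow}_{i:\,b_i=1}\bar h_{q_i}(n_i)\Big)\Big(\prod^{\uparrow}_{i:\,b_i=0}\tilde h_{q_i}(n_i)\Big),$$ where $\prod^{\downarrow}$ is the ordered product with the index $i$ decreasing from left to right, $\prod^{\uparrow}$ is the ordered product with $i$ increasing from left to right, and an empty product is the identity. When $N=1$ the qubit string is omitted and we write $\mathbf{T}^{(k)}_{\mu}(\vec n)$. *)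

theory Defs
  imports "HOL-Analysis.Analysis"
begin

text \<open>Two-qubit operators: complex matrices indexed by the computational basis
  (a, b) of C^2 (x) C^2, where the first component is qubit A and the second qubit B
  (False = |0>, True = |1>).\<close>

type_synonym cmat2 = "complex ^ (bool \<times> bool) ^ (bool \<times> bool)"

datatype qubit = QA | QB

definition adj :: "cmat2 \<Rightarrow> cmat2" where
  "adj M = (\<chi> i j. cnj (M $ j $ i))"

definition unitary :: "cmat2 \<Rightarrow> bool" where
  "unitary M \<longleftrightarrow> adj M ** M = mat 1 \<and> M ** adj M = mat 1"

definition hermitian :: "cmat2 \<Rightarrow> bool" where
  "hermitian M \<longleftrightarrow> adj M = M"

definition sigz :: "qubit \<Rightarrow> cmat2" where
  "sigz q = (\<chi> i j. if i = j then
       (if (case q of QA \<Rightarrow> fst i | QB \<Rightarrow> snd i) then -1 else 1) else 0)"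

definition htil :: "(nat \<Rightarrow> cmat2) \<Rightarrow> qubit \<Rightarrow> nat \<Rightarrow> cmat2" where
  "htil U q n = adj (U n) ** sigz q ** U n"

definition hbar :: "(nat \<Rightarrow> cmat2) \<Rightarrow> cmat2 \<Rightarrow> qubit \<Rightarrow> nat \<Rightarrow> cmat2" where
  "hbar U Ot q n = - (matrix_inv Ot ** htil U q n ** Ot)"

definition cscale :: "complex \<Rightarrow> cmat2 \<Rightarrow> cmat2" where
  "cscale c M = (\<chi> i j. c * M $ i $ j)"

definition mprod :: "cmat2 list \<Rightarrow> cmat2" where
  "mprod Ms = foldr (**) Ms (mat 1)"

text \<open>Control tensor T^{(k)}_{qs;mu}(ns); lists are 0-indexed, so n_i = ns!(i-1) etc.
  Bit strings b range over {0,1}^k; the sign is (-1)^(sum_{j=1}^{k-1} mu_j b_{j+1}).\<close>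
definition ctensor :: "(nat \<Rightarrow> cmat2) \<Rightarrow> cmat2 \<Rightarrow> nat list \<Rightarrow> qubit list \<Rightarrow> nat list \<Rightarrow> cmat2" where
  "ctensor U Ot ns qs mu =
     (\<Sum>b\<in>{b. length b = length ns \<and> set b \<subseteq> {0,1}}.
        cscale ((-1::complex) ^ (\<Sum>j<length ns - 1. mu ! j * b ! (j + 1)))
          (mprod (map (\<lambda>i. hbar U Ot (qs ! i) (ns ! i))
                   (rev (filter (\<lambda>i. b ! i = 1) [0..<length ns])))
           ** mprod (map (\<lambda>i. htil U (qs ! i) (ns ! i))
                   (filter (\<lambda>i. b ! i = 0) [0..<length ns]))))"

end

theory Submission
  imports Defs
begin


lemma matrix_add_rdistrib': "((B + C) ** (A::cmat2)) = (B ** A) + (C ** A)"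
  by (vector matrix_matrix_mult_def sum.distrib[symmetric] field_simps)

lemma cscale_mult_left[simp]: "cscale c A ** B = cscale c (A ** B)"
  unfolding cscale_def matrix_matrix_mult_def by (vector sum_distrib_left mult.assoc)
lemma cscale_mult_right[simp]: "A ** cscale c B = cscale c (A ** B)"
  unfolding cscale_def matrix_matrix_mult_def by (vector sum_distrib_left mult.left_commute)
lemma cscale_add[simp]: "cscale c (A + B) = cscale c A + cscale c B"
  unfolding cscale_def by (vector distrib_left)
lemma cscale_cscale[simp]: "cscale c (cscale d A) = cscale (c*d) A"
  unfolding cscale_def by (vector mult.assoc)
lemma cscale_1[simp]: "cscale 1 A = A"
  unfolding cscale_def by vector
lemma cscale_0[simp]: "cscale 0 A = 0"
  unfolding cscale_def by vector
lemma cscale_zero[simp]: "cscale c 0 = 0"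
  unfolding cscale_def by vector
lemma cscale_addl: "cscale (c+d) A = cscale c A + cscale d A"
  unfolding cscale_def by (vector distrib_right)
lemma cscale_sum: "cscale c (sum f S) = sum (\<lambda>i. cscale c (f i)) S"
  by (induction S rule: infinite_finite_induct) auto
lemma sum_mult_right: "sum f S ** (M::cmat2) = sum (\<lambda>i. f i ** M) S"
  by (induction S rule: infinite_finite_induct) (auto simp: matrix_add_rdistrib')
lemma sum_mult_left: "(M::cmat2) ** sum f S = sum (\<lambda>i. M ** f i) S"
  by (induction S rule: infinite_finite_induct) (auto simp: matrix_add_ldistrib)


definition sd :: "qubit \<Rightarrow> bool \<times> bool \<Rightarrow> complex" where
  "sd q i = (if (case q of QA \<Rightarrow> fst i | QB \<Rightarrow> snd i) then -1 else 1)"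

lemma sigz_alt: "sigz q = (\<chi> i j. if i = j then sd q i else 0)"
  unfolding sigz_def sd_def by simp

lemma diag_mult: "((\<chi> i j. if i = j then f i else 0) ** (\<chi> i j. if i = j then g i else 0) :: cmat2)
   = (\<chi> i j. if i = j then f i * g i else 0)"
proof -
  have "\<And>i j. (\<Sum>k\<in>UNIV. (if i = k then f i else 0) * (if k = j then g k else (0::complex)))
      = (if i = j then f i * g i else 0)"
  proof -
    fix i j :: "bool \<times> bool"
    have "(\<Sum>k\<in>UNIV. (if i = k then f i else 0) * (if k = j then g k else (0::complex)))
       = (\<Sum>k\<in>UNIV. if k = i then f i * (if k = j then g k else 0) else 0)"
      by (rule sum.cong) auto
    also have "\<dots> = f i * (if i = j then g i else 0)" by (simp add: sum.delta)
    finally show "?thesis i j" by simp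
  qed
  then show ?thesis unfolding matrix_matrix_mult_def by (simp add: vec_eq_iff)
qed

lemma sd_sq: "sd q i * sd q i = 1" unfolding sd_def by auto

lemma sigz_sq: "sigz q ** sigz q = mat 1"
  unfolding sigz_alt diag_mult sd_sq mat_def by simp

lemma sigz_comm: "sigz q ** sigz p = sigz p ** sigz q"
proof -
  have "\<And>i j. (if i = j then sd q i * sd p i else 0) = (if i = j then sd p i * sd q i else (0::complex))" by (simp add: mult.commute)
  then show ?thesis unfolding sigz_alt diag_mult by presburger
qed


lemma mneg_left[simp]: "(- A) ** (B::cmat2) = - (A ** B)"
  unfolding matrix_matrix_mult_def by (vector sum_negf)
lemma mneg_right[simp]: "(A::cmat2) ** (- B) = - (A ** B)"
  unfolding matrix_matrix_mult_def by (vector sum_negf)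
lemma cscale_neg[simp]: "cscale c (- A) = - cscale c A"
  unfolding cscale_def by vector

lemma cancel3: "A ** B = mat 1 \<Longrightarrow> X ** A ** (B::cmat2) = X"
  by (metis matrix_mul_assoc matrix_mul_rid)

lemma htil_sq: assumes "unitary (U n)" shows "htil U q n ** htil U q n = mat 1"
proof -
  have u: "U n ** adj (U n) = mat 1" "adj (U n) ** U n = mat 1" using assms unfolding unitary_def by auto
  have "htil U q n ** htil U q n = adj (U n) ** sigz q ** (U n ** adj (U n)) ** sigz q ** U n"
    unfolding htil_def by (simp add: matrix_mul_assoc)
  also have "\<dots> = adj (U n) ** (sigz q ** sigz q) ** U n" by (simp add: u matrix_mul_assoc)
  also have "\<dots> = mat 1" by (simp add: sigz_sq u)
  finally show ?thesis .
qed

lemma htil_comm: assumes "unitary (U n)" shows "htil U q n ** htil U p n = htil U p n ** htil U q n"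
proof -
  have u: "U n ** adj (U n) = mat 1" "adj (U n) ** U n = mat 1" using assms unfolding unitary_def by auto
  have "htil U q n ** htil U p n = adj (U n) ** sigz q ** (U n ** adj (U n)) ** sigz p ** U n"
    unfolding htil_def by (simp add: matrix_mul_assoc)
  also have "\<dots> = adj (U n) ** (sigz q ** sigz p) ** U n" by (simp add: u matrix_mul_assoc)
  also have "\<dots> = adj (U n) ** (sigz p ** sigz q) ** U n" by (simp add: sigz_comm)
  also have "\<dots> = adj (U n) ** sigz p ** (U n ** adj (U n)) ** sigz q ** U n" by (simp add: u matrix_mul_assoc)
  also have "\<dots> = htil U p n ** htil U q n"
    unfolding htil_def by (simp add: matrix_mul_assoc)
  finally show ?thesis .
qed

lemma inv_facts: assumes "unitary Ot"
  shows "Ot ** matrix_inv Ot = mat 1" "matrix_inv Ot ** Ot = mat 1"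
proof -
  have "\<exists>A'. Ot ** A' = mat 1 \<and> A' ** Ot = mat 1" using assms unfolding unitary_def by blast
  then have "Ot ** matrix_inv Ot = mat 1 \<and> matrix_inv Ot ** Ot = mat 1"
    unfolding matrix_inv_def by (rule someI_ex)
  then show "Ot ** matrix_inv Ot = mat 1" "matrix_inv Ot ** Ot = mat 1" by auto
qed

lemma hbar_sq: assumes "unitary (U n)" "unitary Ot" shows "hbar U Ot q n ** hbar U Ot q n = mat 1"
proof -
  note o = inv_facts[OF assms(2)]
  have "hbar U Ot q n ** hbar U Ot q n = matrix_inv Ot ** htil U q n ** (Ot ** matrix_inv Ot) ** htil U q n ** Ot"
    unfolding hbar_def by (simp add: matrix_mul_assoc)
  also have "\<dots> = matrix_inv Ot ** (htil U q n ** htil U q n) ** Ot" by (simp add: o matrix_mul_assoc)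
  also have "\<dots> = mat 1" by (simp add: htil_sq[of U n, OF assms(1)] o)
  finally show ?thesis .
qed

lemma hbar_comm: assumes "unitary (U n)" "unitary Ot"
  shows "hbar U Ot q n ** hbar U Ot p n = hbar U Ot p n ** hbar U Ot q n"
proof -
  note o = inv_facts[OF assms(2)]
  have "hbar U Ot q n ** hbar U Ot p n = matrix_inv Ot ** htil U q n ** (Ot ** matrix_inv Ot) ** htil U p n ** Ot"
    unfolding hbar_def by (simp add: matrix_mul_assoc)
  also have "\<dots> = matrix_inv Ot ** (htil U q n ** htil U p n) ** Ot" by (simp add: o matrix_mul_assoc)
  also have "\<dots> = matrix_inv Ot ** (htil U p n ** htil U q n) ** Ot" by (simp add: htil_comm[of U n, OF assms(1)])
  also have "\<dots> = matrix_inv Ot ** htil U p n ** (Ot ** matrix_inv Ot) ** htil U q n ** Ot" by (simp add: o matrix_mul_assoc)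
  also have "\<dots> = hbar U Ot p n ** hbar U Ot q n"
    unfolding hbar_def by (simp add: matrix_mul_assoc)
  finally show ?thesis .
qed



lemma cscale_nth[simp]: "cscale c A $ i $ j = c * A $ i $ j"
  unfolding cscale_def by simp

definition Pm :: "(qubit \<Rightarrow> cmat2) \<Rightarrow> (qubit \<Rightarrow> cmat2) \<Rightarrow> qubit \<times> nat \<Rightarrow> cmat2 \<Rightarrow> cmat2" where
  "Pm l r a X = X ** r (fst a) + cscale ((-1)^(snd a)) (l (fst a) ** X)"

definition good :: "(qubit \<Rightarrow> cmat2) \<Rightarrow> (qubit \<Rightarrow> cmat2) \<Rightarrow> bool" where
  "good l r \<longleftrightarrow> (\<forall>q. r q ** r q = mat 1 \<and> l q ** l q = mat 1) \<and>
     (\<forall>q p. r q ** r p = r p ** r q \<and> l q ** l p = l p ** l q)"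

lemma Pm_lin: "Pm l r a (cscale c X) = cscale c (Pm l r a X)"
  unfolding Pm_def by (simp add: mult.commute)

lemma Pm_0: "Pm l r a 0 = 0"
  unfolding Pm_def by simp

lemma Pm_comm: assumes "good l r" shows "Pm l r a (Pm l r b X) = Pm l r b (Pm l r a X)"
proof -
  have rc: "r (fst b) ** r (fst a) = r (fst a) ** r (fst b)"
   and lc: "l (fst b) ** l (fst a) = l (fst a) ** l (fst b)" using assms unfolding good_def by auto
  define sa where "sa = ((-1::complex)^(snd a))"
  define sb where "sb = ((-1::complex)^(snd b))"
  have e1: "Pm l r a (Pm l r b X) = X ** (r (fst b) ** r (fst a)) + cscale sb (l (fst b) ** X ** r (fst a))
     + cscale sa (l (fst a) ** X ** r (fst b)) + cscale (sa * sb) ((l (fst a) ** l (fst b)) ** X)"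
    unfolding Pm_def sa_def sb_def by (simp add: matrix_add_rdistrib' matrix_add_ldistrib matrix_mul_assoc)
  have e2: "Pm l r b (Pm l r a X) = X ** (r (fst a) ** r (fst b)) + cscale sa (l (fst a) ** X ** r (fst b))
     + cscale sb (l (fst b) ** X ** r (fst a)) + cscale (sb * sa) ((l (fst b) ** l (fst a)) ** X)"
    unfolding Pm_def sa_def sb_def by (simp add: matrix_add_rdistrib' matrix_add_ldistrib matrix_mul_assoc)
  show ?thesis unfolding e1 e2 rc lc by (simp add: ac_simps)
qed

lemma sign_cases: "(-1::complex)^m = 1 \<or> (-1::complex)^m = -1"
  by (cases "even m") auto

lemma Pm_zero: assumes "good l r" "fst a = fst b" "(-1::complex)^(snd b) = - ((-1)^(snd a))"
  shows "Pm l r b (Pm l r a X) = 0"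
proof -
  obtain q where q: "fst a = q" "fst b = q" using assms by auto
  have r2: "r q ** r q = mat 1" and l2: "l q ** l q = mat 1" using assms(1) unfolding good_def by auto
  define s where "s = ((-1::complex)^(snd a))"
  have s: "s = 1 \<or> s = -1" unfolding s_def by (rule sign_cases)
  have "Pm l r b (Pm l r a X) = X ** (r q ** r q) + cscale (-s) (l q ** X ** r q)
     + cscale s (l q ** X ** r q) + cscale (- s * s) ((l q ** l q) ** X)"
    unfolding Pm_def s_def using q assms(3) by (simp add: matrix_add_rdistrib' matrix_add_ldistrib matrix_mul_assoc)
  also have "\<dots> = 0" using s unfolding r2 l2 by (auto simp: vec_eq_iff)
  finally show ?thesis .
qed

lemma Pm_cube: assumes "good l r"
  shows "Pm l r a (Pm l r a (Pm l r a X)) = cscale 4 (Pm l r a X)"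
proof -
  obtain q m where a: "a = (q, m)" by (cases a)
  have r2: "r q ** r q = mat 1" and l2: "l q ** l q = mat 1" using assms(1) unfolding good_def by auto
  have c1: "\<And>Y. Y ** (r q ** r q) = Y" by (simp add: r2)
  have c2: "\<And>Y. l q ** (l q ** Y) = Y" by (simp add: matrix_mul_assoc l2)
  have c3: "\<And>Y. Y ** (r q ** (r q ** Z)) = Y ** Z" for Z by (simp add: matrix_mul_assoc r2)
  obtain s where sd: "(-1::complex)^m = s" and s: "s = 1 \<or> s = -1" using sign_cases by blast
  have e1: "Pm l r a (Pm l r a X) = cscale 2 X + cscale (2 * s) (l q ** (X ** r q))"
    unfolding Pm_def a using s
    by (auto simp: sd matrix_add_rdistrib' matrix_add_ldistrib c1 c2 c3 matrix_mul_assoc[symmetric] vec_eq_iff)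
  show ?thesis unfolding e1
    unfolding Pm_def a using s
    by (auto simp: sd matrix_add_rdistrib' matrix_add_ldistrib c1 c2 c3 matrix_mul_assoc[symmetric] vec_eq_iff)
qed



lemma foldl_comm_step:
  assumes "\<And>a b x. f (f x a) b = f (f x b) a"
  shows "foldl f (f x a) ys = f (foldl f x ys) a"
  by (induction ys arbitrary: x) (simp_all add: assms)

lemma foldl_perm:
  assumes "\<And>a b x. f (f x a) b = f (f x b) a"
  shows "mset xs = mset ys \<Longrightarrow> foldl f x xs = foldl f x ys"
proof (induction xs arbitrary: x ys)
  case Nil then show ?case by simp
next
  case (Cons a xs)
  have "a \<in> set ys" using Cons.prems by (metis list.set_intros(1) set_mset_mset)
  then obtain ys1 ys2 where ys: "ys = ys1 @ a # ys2" by (meson split_list)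
  have "mset xs = mset (ys1 @ ys2)" using Cons.prems ys by simp
  then have "foldl f (f x a) xs = foldl f (f x a) (ys1 @ ys2)" by (rule Cons.IH)
  also have "\<dots> = foldl f (f (foldl f x ys1) a) ys2"
    by (simp add: foldl_comm_step[of f, OF assms])
  finally show ?case using ys by simp
qed

definition fl :: "(qubit \<Rightarrow> cmat2) \<Rightarrow> (qubit \<Rightarrow> cmat2) \<Rightarrow> (qubit \<times> nat) list \<Rightarrow> cmat2 \<Rightarrow> cmat2" where
  "fl l r xs X = foldl (\<lambda>X a. Pm l r a X) X xs"

lemma fl_perm: assumes "good l r" "mset xs = mset ys" shows "fl l r xs X = fl l r ys X"
proof -
  have "\<And>a b x. Pm l r b (Pm l r a x) = Pm l r a (Pm l r b x)" using Pm_comm[OF assms(1)] by blast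
  then show ?thesis unfolding fl_def by (rule foldl_perm[OF _ assms(2)])
qed

lemma fl_Cons: "fl l r (a # xs) X = fl l r xs (Pm l r a X)"
  unfolding fl_def by simp

lemma fl_lin: "fl l r xs (cscale c X) = cscale c (fl l r xs X)"
  unfolding fl_def by (induction xs arbitrary: X) (simp_all add: Pm_lin)

lemma fl_0: "fl l r xs 0 = 0"
  unfolding fl_def by (induction xs) (simp_all add: Pm_0)



lemma mset_remove1_ins: "x \<in> set xs \<Longrightarrow> mset xs = add_mset x (mset (remove1 x xs))"
  by (induction xs) auto

lemma count_filter: "count (mset xs) x = length (filter (\<lambda>p. p = x) xs)"
  by (induction xs) auto

lemma core:
  assumes len: "length bl = 5" and sm: "\<forall>a\<in>set bl. snd a \<in> {0,1}"
  shows "\<exists>T c. length T = 3 \<and> hd T = hd bl \<and> set T \<subseteq> set bl \<and>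
           (\<forall>l r X. good l r \<longrightarrow> fl l r bl X = cscale c (fl l r T X))"
proof (cases "\<exists>a\<in>set bl. \<exists>b\<in>set bl. fst a = fst b \<and> a \<noteq> b")
  case True
  then obtain a b where ab: "a \<in> set bl" "b \<in> set bl" "fst a = fst b" "a \<noteq> b" by blast
  then have "snd a \<noteq> snd b" by (metis prod.collapse)
  moreover have "snd a = 0 \<or> snd a = 1" "snd b = 0 \<or> snd b = 1" using sm ab by auto
  ultimately have "(snd a = 0 \<and> snd b = 1) \<or> (snd a = 1 \<and> snd b = 0)" by auto
  then have sg: "(-1::complex)^(snd b) = - ((-1)^(snd a))" by auto
  define rest where "rest = remove1 b (remove1 a bl)"
  have bin: "b \<in> set (remove1 a bl)" using ab by (simp add: in_set_remove1)
  note f1 = mset_remove1_ins[OF ab(1)] and f2 = mset_remove1_ins[OF bin]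
  have ms: "mset bl = mset (a # b # rest)" unfolding rest_def mset.simps by (simp only: f1 f2)
  show ?thesis
  proof (intro exI conjI allI impI)
    show "length (take 3 bl) = 3" using len by simp
    show "hd (take 3 bl) = hd bl" using len by (cases bl) auto
    show "set (take 3 bl) \<subseteq> set bl" by (rule set_take_subset)
    fix l r X assume g: "good l r"
    have "fl l r bl X = fl l r (a # b # rest) X" using fl_perm[OF g ms] .
    also have "\<dots> = 0" by (simp add: fl_Cons Pm_zero[OF g ab(3) sg] fl_0)
    finally show "fl l r bl X = cscale 0 (fl l r (take 3 bl) X)" by simp
  qed
next
  case False
  then have cons: "\<And>a b. a \<in> set bl \<Longrightarrow> b \<in> set bl \<Longrightarrow> fst a = fst b \<Longrightarrow> a = b" by blast
  define x where "x = hd bl"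
  have xin: "x \<in> set bl" unfolding x_def using len by (cases bl) auto
  have cnt: "\<And>y. y \<in> set bl \<Longrightarrow> count (mset bl) y = length (filter (\<lambda>p. fst p = fst y) bl)"
  proof -
    fix y assume y: "y \<in> set bl"
    have "filter (\<lambda>p. p = y) bl = filter (\<lambda>p. fst p = fst y) bl"
      by (rule filter_cong) (auto dest: cons[OF _ y])
    then show "count (mset bl) y = length (filter (\<lambda>p. fst p = fst y) bl)"
      by (simp add: count_filter)
  qed
  have split: "length (filter (\<lambda>p. fst p = fst x) bl) + length (filter (\<lambda>p. \<not> fst p = fst x) bl) = 5"
    by (simp only: sum_length_filter_compl len)
  obtain y where yin: "y \<in> set bl" and y3: "count (mset bl) y \<ge> 3"
  proof (cases "length (filter (\<lambda>p. fst p = fst x) bl) \<ge> 3")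
    case True then show ?thesis using that[OF xin] cnt[OF xin] by simp
  next
    case False
    then have "length (filter (\<lambda>p. \<not> fst p = fst x) bl) \<ge> 3" using split by linarith
    then have "filter (\<lambda>p. \<not> fst p = fst x) bl \<noteq> []" by auto
    then obtain y where y: "y \<in> set bl" "fst y \<noteq> fst x" by (auto simp: filter_empty_conv)
    have feq: "(\<lambda>p. fst p = fst y) = (\<lambda>p. \<not> fst p = fst x)"
    proof (rule ext)
      fix p show "(fst p = fst y) = (\<not> fst p = fst x)" using y(2)
        by (cases "fst p"; cases "fst y"; cases "fst x") auto
    qed
    have "length (filter (\<lambda>p. fst p = fst y) bl) \<ge> 3"
      using \<open>length (filter (\<lambda>p. \<not> fst p = fst x) bl) \<ge> 3\<close> unfolding feq by simp
    then show ?thesis using that[OF y(1)] cnt[OF y(1)] by simp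
  qed
  define rest where "rest = remove1 y (remove1 y (remove1 y bl))"
  have ms: "mset bl = mset (y # y # y # rest)"
  proof -
    have c1: "count (mset (remove1 y bl)) y \<ge> 2" using y3 by simp
    have c2: "count (mset (remove1 y (remove1 y bl))) y \<ge> 1" using y3 by simp
    have i1: "y \<in> set (remove1 y bl)"
    proof (rule ccontr)
      assume "\<not> y \<in> set (remove1 y bl)"
      then have "count (mset (remove1 y bl)) y = 0" by (simp only: count_mset_0_iff not_False_eq_True)
      with c1 show False by simp
    qed
    have i2: "y \<in> set (remove1 y (remove1 y bl))"
    proof (rule ccontr)
      assume "\<not> y \<in> set (remove1 y (remove1 y bl))"
      then have "count (mset (remove1 y (remove1 y bl))) y = 0" by (simp only: count_mset_0_iff not_False_eq_True)
      with c2 show False by simp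
    qed
    note f1 = mset_remove1_ins[OF yin] and f2 = mset_remove1_ins[OF i1] and f3 = mset_remove1_ins[OF i2]
    show ?thesis unfolding rest_def mset.simps by (simp only: f1 f2 f3)
  qed
  define T where "T = (if x = y then y # rest else x # remove1 x (y # rest))"
  have xT: "x \<in> set (y # rest)"
  proof -
    have "set bl = set (y # y # y # rest)" using arg_cong[OF ms, of set_mset] by simp
    then show ?thesis using xin by simp
  qed
  have mT: "mset T = mset (y # rest)" unfolding T_def using xT by auto
  have lr: "length rest = 2" using mset_eq_length[OF ms] len by simp
  show ?thesis
  proof (intro exI conjI allI impI)
    show "length T = 3" using mset_eq_length[OF mT] lr by simp
    show "hd T = hd bl" unfolding T_def x_def by auto
    show "set T \<subseteq> set bl"
    proof -
      have "set T = set (y # rest)" using arg_cong[OF mT, of set_mset] by simp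
      also have "\<dots> \<subseteq> set (y # y # y # rest)" by auto
      also have "\<dots> = set bl" using arg_cong[OF ms, of set_mset] by simp
      finally show ?thesis .
    qed
    fix l r X assume g: "good l r"
    have "fl l r bl X = fl l r (y # y # y # rest) X" using fl_perm[OF g ms] .
    also have "\<dots> = cscale 4 (fl l r (y # rest) X)" by (simp add: fl_Cons Pm_cube[OF g] fl_lin)
    also have "\<dots> = cscale 4 (fl l r T X)" using fl_perm[OF g mT] by simp
    finally show "fl l r bl X = cscale 4 (fl l r T X)" .
  qed
qed



definition Bs :: "nat \<Rightarrow> nat list set" where
  "Bs k = {b. length b = k \<and> set b \<subseteq> {0,1}}"

definition gsum :: "(nat \<Rightarrow> cmat2) \<Rightarrow> (nat \<Rightarrow> cmat2) \<Rightarrow> nat list \<Rightarrow> nat \<Rightarrow> cmat2" where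
  "gsum A R mu k = (\<Sum>b\<in>Bs k.
        cscale ((-1::complex) ^ (\<Sum>j<k - 1. mu ! j * b ! (j + 1)))
          (mprod (map A (rev (filter (\<lambda>i. b ! i = 1) [0..<k])))
           ** mprod (map R (filter (\<lambda>i. b ! i = 0) [0..<k]))))"

lemma ctensor_gsum: "ctensor U Ot ns qs mu =
   gsum (\<lambda>i. hbar U Ot (qs ! i) (ns ! i)) (\<lambda>i. htil U (qs ! i) (ns ! i)) mu (length ns)"
  unfolding ctensor_def gsum_def Bs_def by simp

lemma mprod_append: "mprod (xs @ ys) = mprod xs ** mprod ys"
  unfolding mprod_def by (induction xs) (simp_all add: matrix_mul_assoc)

lemma mprod_Cons: "mprod (x # xs) = x ** mprod xs"
  unfolding mprod_def by simp

lemma mprod_single[simp]: "mprod [x] = x"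
  unfolding mprod_def by simp

lemma mprod_Nil[simp]: "mprod [] = mat 1"
  unfolding mprod_def by simp

lemma Bs_finite: "finite (Bs k)"
proof -
  have "Bs k = {xs. set xs \<subseteq> {0,1} \<and> length xs = k}" unfolding Bs_def by auto
  then show ?thesis using finite_lists_length_eq[of "{0,1::nat}" k] by simp
qed

lemma Bs_Suc: "Bs (Suc k) = (\<lambda>(b,x). b @ [x]) ` (Bs k \<times> {0,1})"
proof
  show "Bs (Suc k) \<subseteq> (\<lambda>(b,x). b @ [x]) ` (Bs k \<times> {0,1})"
  proof
    fix b assume b: "b \<in> Bs (Suc k)"
    then have ne: "b \<noteq> []" unfolding Bs_def by auto
    have e: "b = butlast b @ [last b]" using ne by simp
    have "set b \<subseteq> {0,1}" "length b = Suc k" using b unfolding Bs_def by auto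
    then have "butlast b \<in> Bs k" "last b \<in> {0,1}"
      unfolding Bs_def using ne in_set_butlastD last_in_set by fastforce+
    then show "b \<in> (\<lambda>(b,x). b @ [x]) ` (Bs k \<times> {0,1})" using e
      by (metis (no_types, lifting) SigmaI case_prod_conv image_eqI)
  qed
  show "(\<lambda>(b,x). b @ [x]) ` (Bs k \<times> {0,1}) \<subseteq> Bs (Suc k)"
    unfolding Bs_def by auto
qed

lemma inj_snoc: "inj_on (\<lambda>(b,x). b @ [x]) S"
  by (rule inj_onI) auto

lemma filter_snoc: "length b = k \<Longrightarrow>
  filter (\<lambda>i. (b @ [x]) ! i = v) [0..<Suc k] = filter (\<lambda>i. b ! i = v) [0..<k] @ (if x = v then [k] else [])"
proof -
  assume l: "length b = k"
  have "filter (\<lambda>i. (b @ [x]) ! i = v) [0..<k] = filter (\<lambda>i. b ! i = v) [0..<k]"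
    by (rule filter_cong) (auto simp: nth_append l)
  then show ?thesis using l by (simp add: nth_append)
qed

lemma sign_snoc: "length b = k \<Longrightarrow>
  (\<Sum>j<Suc k - 1. mu ! j * (b @ [x]) ! (j + 1)) =
  (\<Sum>j<k - 1. mu ! j * b ! (j + 1)) + (if k = 0 then 0 else mu ! (k - 1) * x)"
proof (cases k)
  case 0 then show ?thesis by simp
next
  case (Suc k')
  assume l: "length b = k"
  have "(\<Sum>j<k'. mu ! j * (b @ [x]) ! (j + 1)) = (\<Sum>j<k'. mu ! j * b ! (j + 1))"
    by (rule sum.cong) (auto simp: nth_append l Suc)
  then show ?thesis using l Suc by (simp add: nth_append)
qed

lemma gsum_Suc: "gsum A R mu (Suc k) =
   gsum A R mu k ** R k + cscale ((-1) ^ ((0 # mu) ! k)) (A k ** gsum A R mu k)"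
proof -
  define F where "F k b = cscale ((-1::complex) ^ (\<Sum>j<k - 1. mu ! j * b ! (j + 1)))
          (mprod (map A (rev (filter (\<lambda>i. b ! i = 1) [0..<k])))
           ** mprod (map R (filter (\<lambda>i. b ! i = 0) [0..<k])))" for k b
  define sg where "sg = ((-1::complex) ^ ((0 # mu) ! k))"
  have g: "gsum A R mu k' = (\<Sum>b\<in>Bs k'. F k' b)" for k' unfolding gsum_def F_def by simp
  have F0: "F (Suc k) (b @ [0]) = F k b ** R k" if b: "b \<in> Bs k" for b
  proof -
    have l: "length b = k" using b unfolding Bs_def by auto
    show ?thesis unfolding F_def sign_snoc[OF l] filter_snoc[OF l]
      by (simp add: mprod_append matrix_mul_assoc)
  qed
  have F1: "F (Suc k) (b @ [1]) = cscale sg (A k ** F k b)" if b: "b \<in> Bs k" for b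
  proof -
    have l: "length b = k" using b unfolding Bs_def by auto
    have s: "(-1::complex) ^ ((\<Sum>j<k - 1. mu ! j * b ! (j + 1)) + (if k = 0 then 0 else mu ! (k - 1) * 1))
      = sg * (-1) ^ (\<Sum>j<k - 1. mu ! j * b ! (j + 1))"
      unfolding sg_def by (cases k) (simp_all add: power_add)
    show ?thesis unfolding F_def sign_snoc[OF l] filter_snoc[OF l] s
      by (simp add: mprod_append mprod_Cons matrix_mul_assoc)
  qed
  have "gsum A R mu (Suc k) = (\<Sum>p\<in>Bs k \<times> {0,1}. F (Suc k) (fst p @ [snd p]))"
    unfolding g Bs_Suc by (subst sum.reindex[OF inj_snoc]) (simp add: case_prod_beta)
  also have "\<dots> = (\<Sum>b\<in>Bs k. \<Sum>x\<in>{0,1}. F (Suc k) (b @ [x]))"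
    by (subst sum.cartesian_product) (simp add: case_prod_beta)
  also have "\<dots> = (\<Sum>b\<in>Bs k. F k b ** R k + cscale sg (A k ** F k b))"
    by (rule sum.cong) (simp_all add: F0 F1[simplified])
  also have "\<dots> = gsum A R mu k ** R k + cscale sg (A k ** gsum A R mu k)"
    unfolding g by (simp add: sum.distrib sum_mult_right sum_mult_left cscale_sum)
  finally show ?thesis unfolding sg_def .
qed

lemma gsum_foldl: "gsum A R mu k =
   foldl (\<lambda>X t. X ** R t + cscale ((-1) ^ ((0 # mu) ! t)) (A t ** X)) (mat 1) [0..<k]"
proof (induction k)
  case 0
  have "Bs 0 = {[]}" unfolding Bs_def by auto
  then show ?case unfolding gsum_def by (simp add: mprod_def)
next
  case (Suc k) then show ?case by (simp add: gsum_Suc)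
qed

lemma foldl_shift: "length T = m \<Longrightarrow> (\<And>X j. j < m \<Longrightarrow> f X (a + j) = g X (T ! j)) \<Longrightarrow>
   foldl f X [a..<a+m] = foldl g X T"
proof (induction T arbitrary: a X m)
  case Nil then show ?case by simp
next
  case (Cons t T)
  then obtain m' where m: "m = Suc m'" by auto
  have "[a..<a+m] = a # [Suc a..<Suc a + m']" using m upt_conv_Cons by auto
  moreover have "f X a = g X t" using Cons.prems(2)[of 0] m by simp
  moreover have "foldl f Y [Suc a..<Suc a + m'] = foldl g Y T" for Y
  proof (rule Cons.IH)
    show "length T = m'" using Cons.prems m by simp
    fix Z j assume "j < m'"
    then show "f Z (Suc a + j) = g Z (T ! j)" using Cons.prems(2)[of "Suc j" Z] m by simp
  qed
  ultimately show ?case by simp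
qed

lemma pigeon:
  assumes "L \<ge> 1" "k > 4 * L" "length ns = k" "sorted_wrt (\<ge>) ns" "\<forall>n\<in>set ns. 1 \<le> n \<and> n \<le> L"
  shows "\<exists>i. i + 4 < k \<and> (\<forall>j\<in>{i..i+4}. ns ! j = ns ! i)"
proof (rule ccontr)
  assume na: "\<not> ?thesis"
  have mono: "ns ! j \<le> ns ! i" if "i \<le> j" "j < k" for i j
  proof (cases "i = j")
    case True then show ?thesis by simp
  next
    case False
    then show ?thesis using sorted_wrt_nth_less[OF assms(4), of i j] that assms(3) by simp
  qed
  have dec: "ns ! (i + 4) < ns ! i" if "i + 4 < k" for i
  proof (rule ccontr)
    assume "\<not> ns ! (i + 4) < ns ! i"
    then have eq: "ns ! (i + 4) = ns ! i" using mono[of i "i+4"] that by auto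
    have "\<forall>j\<in>{i..i+4}. ns ! j = ns ! i"
    proof
      fix j assume j: "j \<in> {i..i+4}"
      show "ns ! j = ns ! i" using mono[of i j] mono[of j "i+4"] j that eq by auto
    qed
    then show False using na that by blast
  qed
  have "4 * m < k \<longrightarrow> ns ! (4 * m) + m \<le> ns ! 0" for m
  proof (induction m)
    case 0 then show ?case by simp
  next
    case (Suc m)
    show ?case
    proof
      assume a: "4 * Suc m < k"
      have "ns ! (4 + 4 * m) < ns ! (4 * m)" using dec[of "4*m"] a by (simp add: add.commute)
      moreover have "ns ! (4 * m) + m \<le> ns ! 0" using Suc a by simp
      ultimately show "ns ! (4 * Suc m) + Suc m \<le> ns ! 0" by simp
    qed
  qed
  then have "ns ! (4 * L) + L \<le> ns ! 0" using assms(2) by blast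
  moreover have "ns ! (4 * L) \<in> set ns" "ns ! 0 \<in> set ns" using assms(2,3) by simp_all
  then have "ns ! (4 * L) \<ge> 1" "ns ! 0 \<le> L" using assms(5) by blast+
  ultimately show False using assms(1) by linarith
qed



lemma upt_split: "a \<le> b \<Longrightarrow> b \<le> c \<Longrightarrow> [a..<c] = [a..<b] @ [b..<c]"
  using upt_add_eq_append[of a b "c-b"] by simp

lemma foldl_stp_lin:
  "foldl (\<lambda>X t. X ** R t + cscale (s t) (A t ** X)) (cscale c X) xs =
   cscale c (foldl (\<lambda>X t. X ** R t + cscale (s t) (A t ** X)) X xs)"
proof (induction xs arbitrary: X)
  case Nil then show ?case by simp
next
  case (Cons a xs)
  have h: "cscale c X ** R a + cscale (s a) (A a ** cscale c X) = cscale c (X ** R a + cscale (s a) (A a ** X))"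
    by (simp add: mult.commute)
  show ?case by (simp only: foldl_Cons h Cons.IH)
qed

theorem mainTheorem4:
  fixes L k :: nat and ns :: "nat list" and qs :: "qubit list" and mu :: "nat list"
  assumes "L \<ge> 1"
    and "k > 4 * L"
    and "length ns = k" and "sorted_wrt (\<ge>) ns" and "\<forall>n\<in>set ns. 1 \<le> n \<and> n \<le> L"
    and "length qs = k"
    and "length mu = k - 1" and "set mu \<subseteq> {0, 1}"
  shows "\<exists>i. i + 4 < k \<and> (\<forall>j\<in>{i..i+4}. ns ! j = ns ! i) \<and>
           (\<exists>qs' mu' (c::complex).
              length qs' = k - 2 \<and> length mu' = k - 3 \<and> set mu' \<subseteq> {0, 1} \<and>
              (\<forall>U Ot. (\<forall>n\<in>{1..L}. unitary (U n)) \<and> unitary Ot \<and> hermitian Ot \<longrightarrow>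
                 ctensor U Ot ns qs mu =
                 cscale c (ctensor U Ot (take i ns @ drop (i + 2) ns) qs' mu')))"
proof -
  obtain i0 where i0: "i0 + 4 < k" and i0b: "\<forall>j\<in>{i0..i0+4}. ns ! j = ns ! i0"
    using pigeon[OF assms(1-5)] by blast
  define n where "n = ns ! i0"
  have nb: "ns ! (i0 + j) = n" if "j < 5" for j
  proof -
    have "i0 + j \<in> {i0..i0+4}" using that by simp
    then show ?thesis using i0b unfolding n_def by blast
  qed
  define mm where "mm = 0 # mu"
  have lmm: "length mm = k" using assms(7) i0 by (simp add: mm_def)
  have mm01: "set mm \<subseteq> {0,1}" using assms(8) by (simp add: mm_def)
  define bl where "bl = map (\<lambda>t. (qs ! t, mm ! t)) [i0..<i0+5]"
  have lbl: "length bl = 5" unfolding bl_def by simp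
  have sbl: "\<forall>a\<in>set bl. snd a \<in> {0,1}"
  proof
    fix a assume "a \<in> set bl"
    then obtain t where t: "t < i0 + 5" "a = (qs ! t, mm ! t)" unfolding bl_def by auto
    then have "mm ! t \<in> set mm" using lmm i0 by simp
    then show "snd a \<in> {0,1}" using mm01 t by auto
  qed
  have hbl: "hd bl = (qs ! i0, mm ! i0)" unfolding bl_def by (simp add: upt_conv_Cons)
  have nbl: "\<And>j. j < 5 \<Longrightarrow> bl ! j = (qs ! (i0 + j), mm ! (i0 + j))" unfolding bl_def by simp
  obtain T c where T: "length T = 3" "hd T = hd bl" "set T \<subseteq> set bl"
    and Teq: "\<forall>l r X. good l r \<longrightarrow> fl l r bl X = cscale c (fl l r T X)"
    using core[OF lbl sbl] by blast
  define qs' where "qs' = take i0 qs @ map fst T @ drop (i0+5) qs"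
  define mm' where "mm' = take i0 mm @ map snd T @ drop (i0+5) mm"
  define mu' where "mu' = tl mm'"
  define ns' where "ns' = take i0 ns @ drop (i0+2) ns"
  have lqs': "length qs' = k - 2" unfolding qs'_def using T(1) assms(6) i0 by simp
  have lmm': "length mm' = k - 2" unfolding mm'_def using T(1) lmm i0 by simp
  have lns': "length ns' = k - 2" unfolding ns'_def using assms(3) i0 by simp
  have hmm': "mm' = 0 # mu'"
  proof -
    have ne: "mm' \<noteq> []" using lmm' i0 by auto
    have "hd mm' = 0"
    proof (cases "i0 = 0")
      case True
      have "hd mm' = snd (hd T)" unfolding mm'_def using True T(1) by (cases T) auto
      also have "\<dots> = mm ! 0" using T(2) hbl True by simp
      finally show ?thesis by (simp add: mm_def)
    next
      case False
      have tne: "take i0 mm \<noteq> []" using False by (simp add: mm_def)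
      then have "hd mm' = hd (take i0 mm)" unfolding mm'_def by simp
      also have "\<dots> = mm ! 0" using False tne by (simp add: hd_conv_nth)
      finally show ?thesis by (simp add: mm_def)
    qed
    moreover have "mm' = hd mm' # tl mm'" using ne by simp
    ultimately show ?thesis unfolding mu'_def by simp
  qed
  have lmu': "length mu' = k - 3" unfolding mu'_def using lmm' by simp
  have smu': "set mu' \<subseteq> {0,1}"
  proof -
    have "set (map snd T) \<subseteq> {0,1}"
    proof
      fix x assume "x \<in> set (map snd T)"
      then obtain a where a: "a \<in> set T" "x = snd a" by auto
      have abl: "a \<in> set bl" using T(3) a(1) by (rule subsetD)
      have "snd a \<in> {0,1}" using sbl abl by (rule bspec)
      then show "x \<in> {0,1}" using a(2) by simp
    qed
    moreover have "set (take i0 mm) \<subseteq> {0,1}" by (rule subset_trans[OF set_take_subset mm01])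
    moreover have "set (drop (i0+5) mm) \<subseteq> {0,1}" by (rule subset_trans[OF set_drop_subset mm01])
    ultimately have "set mm' \<subseteq> {0,1}" unfolding mm'_def set_append by (simp only: Un_subset_iff)
    then have "set (0 # mu') \<subseteq> {0,1}" by (simp only: hmm')
    then show ?thesis by simp
  qed
  have main: "ctensor U Ot ns qs mu = cscale c (ctensor U Ot ns' qs' mu')"
    if asm: "(\<forall>n\<in>{1..L}. unitary (U n)) \<and> unitary Ot \<and> hermitian Ot" for U Ot
  proof -
    have "n \<in> set ns" unfolding n_def using i0 assms(3) by simp
    then have un: "unitary (U n)" using asm assms(5) by auto
    have uo: "unitary Ot" using asm by auto
    define l where "l q = hbar U Ot q n" for q
    define r where "r q = htil U q n" for q
    have g: "good l r" unfolding good_def l_def r_def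
      using htil_sq[of U n, OF un] htil_comm[of U n, OF un] hbar_sq[of U n, OF un uo] hbar_comm[of U n, OF un uo]
      by blast
    define stp where "stp X t = X ** htil U (qs ! t) (ns ! t)
        + cscale ((-1) ^ (mm ! t)) (hbar U Ot (qs ! t) (ns ! t) ** X)" for X t
    define stp' where "stp' X t = X ** htil U (qs' ! t) (ns' ! t)
        + cscale ((-1) ^ (mm' ! t)) (hbar U Ot (qs' ! t) (ns' ! t) ** X)" for X t
    have e1: "ctensor U Ot ns qs mu = foldl stp (mat 1) [0..<k]"
      unfolding ctensor_gsum gsum_foldl stp_def mm_def assms(3) by simp
    have e2: "ctensor U Ot ns' qs' mu' = foldl stp' (mat 1) [0..<k-2]"
      unfolding ctensor_gsum gsum_foldl stp'_def hmm' lns' by simp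
    define Y where "Y = foldl stp (mat 1) [0..<i0]"
    have s1: "foldl stp (mat 1) [0..<k] = foldl stp (foldl stp Y [i0..<i0+5]) [i0+5..<k]"
      unfolding Y_def using i0 upt_split[of 0 i0 k] upt_split[of i0 "i0+5" k] by simp
    have s2: "foldl stp Z [i0..<i0+5] = fl l r bl Z" for Z
      unfolding fl_def
    proof (rule foldl_shift[OF lbl])
      fix X and j :: nat assume j: "j < 5"
      show "stp X (i0 + j) = Pm l r (bl ! j) X"
        unfolding stp_def Pm_def nbl[OF j] l_def r_def using nb[OF j] by simp
    qed
    have s3: "foldl stp' (mat 1) [0..<k-2] =
       foldl stp' (foldl stp' (foldl stp' (mat 1) [0..<i0]) [i0..<i0+3]) [i0+3..<k-2]"
      using i0 upt_split[of 0 i0 "k-2"] upt_split[of i0 "i0+3" "k-2"] by simp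
    have p1: "foldl stp' (mat 1) [0..<i0] = Y"
      unfolding Y_def
    proof -
      have "foldl stp' (mat 1) [0..<0+i0] = foldl stp (mat 1) [0..<i0]"
      proof (rule foldl_shift)
        show "length [0..<i0] = i0" by simp
        fix X and j :: nat assume j: "j < i0"
        show "stp' X (0 + j) = stp X ([0..<i0] ! j)"
          unfolding stp_def stp'_def qs'_def mm'_def ns'_def
          using j i0 assms(3,6) lmm by (simp add: nth_append)
      qed
      then show "foldl stp' (mat 1) [0..<i0] = foldl stp (mat 1) [0..<i0]" by simp
    qed
    have p2: "foldl stp' Z [i0..<i0+3] = fl l r T Z" for Z
      unfolding fl_def
    proof (rule foldl_shift[OF T(1)])
      fix X and j :: nat assume j: "j < 3"
      have nn: "ns' ! (i0 + j) = n" unfolding ns'_def using j i0 assms(3) nb[of "j+2"]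
        by (simp add: nth_append add.commute add.left_commute)
      have qq: "qs' ! (i0 + j) = fst (T ! j)" unfolding qs'_def using j i0 assms(6) T(1)
        by (simp add: nth_append)
      have mq: "mm' ! (i0 + j) = snd (T ! j)" unfolding mm'_def using j i0 lmm T(1)
        by (simp add: nth_append)
      show "stp' X (i0 + j) = Pm l r (T ! j) X"
        unfolding stp'_def Pm_def l_def r_def nn qq mq by simp
    qed
    have p3: "foldl stp' W [i0+3..<k-2] = foldl stp W [i0+5..<k]" for W
    proof -
      have kk: "k - 2 = i0 + 3 + (k - i0 - 5)" using i0 by simp
      show ?thesis unfolding kk
      proof (rule foldl_shift)
        show "length [i0+5..<k] = k - i0 - 5" by simp
        fix X and j :: nat assume j: "j < k - i0 - 5"
        have "[i0+5..<k] ! j = i0 + 5 + j" using j by simp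
        moreover have "ns' ! (i0 + 3 + j) = ns ! (i0 + 5 + j)" unfolding ns'_def using j i0 assms(3)
          by (simp add: nth_append add_ac)
        moreover have "qs' ! (i0 + 3 + j) = qs ! (i0 + 5 + j)" unfolding qs'_def using j i0 assms(6) T(1)
          by (simp add: nth_append add_ac)
        moreover have "mm' ! (i0 + 3 + j) = mm ! (i0 + 5 + j)" unfolding mm'_def using j i0 lmm T(1)
          by (simp add: nth_append add_ac)
        ultimately show "stp' X (i0 + 3 + j) = stp X ([i0+5..<k] ! j)"
          unfolding stp_def stp'_def by simp
      qed
    qed
    have "ctensor U Ot ns qs mu = foldl stp (cscale c (fl l r T Y)) [i0+5..<k]"
      unfolding e1 s1 s2 using Teq g by simp
    also have "\<dots> = cscale c (foldl stp (fl l r T Y) [i0+5..<k])"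
      unfolding stp_def by (rule foldl_stp_lin)
    also have "\<dots> = cscale c (ctensor U Ot ns' qs' mu')"
      unfolding e2 s3 p1 p2 p3 by simp
    finally show ?thesis .
  qed
  show ?thesis
    apply (rule exI[of _ i0])
    apply (intro conjI)
      apply (rule i0)
     apply (rule i0b)
    apply (rule exI[of _ qs'], rule exI[of _ mu'], rule exI[of _ c])
    apply (intro conjI allI impI)
       apply (rule lqs')
      apply (rule lmu')
     apply (rule smu')
    apply (unfold ns'_def[symmetric])
    apply (erule main)
    done
qed


end
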